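(* For every positive integer $n$, the number \[ a_n:=\frac{1}{8n^2\binom{2n}{n}^2}\sum_{k=0}^{n-1}(-1)^{n-1-k}\binom{2k}{k}^5(205k^2+160k+32) \] is a positive integer. *)

theory Defs
  imports Main "HOL.Rat"
begin

definition a_seq :: "nat \<Rightarrow> rat" where
  "a_seq n = (\<Sum>k<n. (-1) ^ (n - 1 - k) * of_nat ((2*k) choose k) ^ 5
                 * of_nat (205*k^2 + 160*k + 32))
             / (8 * of_nat n ^ 2 * of_nat ((2*n) choose n) ^ 2)"

end

theory Submission
  imports Defs
begin


definition uu :: "nat \<Rightarrow> nat \<Rightarrow> nat" where
  "uu n k = ((2*n+1) choose k) * ((n+k) choose k)^2"

lemma bin_step: "(a choose Suc k) * Suc k = (a choose k) * (a - k)"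
  using binomial_absorption[of k a] binomial_absorb_comp[of a k] by (simp add: mult.commute)

lemma bin_up: "((Suc a) choose k) * (Suc a - k) = (a choose k) * Suc a"
  using binomial_absorb_comp[of "Suc a" k] by (simp add: mult.commute)

lemma r1: "(a::nat) * b^2 * s^3 = (a*s) * (b*s)^2"
  by (simp add: power2_eq_square power3_eq_cube mult_ac)
lemma r2: "((a::nat)*d) * (e*b)^2 = a*b^2*d*e^2"
  by (simp add: power2_eq_square mult_ac)

lemma uu_step: "uu m (Suc k) * (Suc k)^3 = uu m k * (2*m+1-k) * (Suc (m+k))^2"
proof -
  have h1: "(2*m+1 choose Suc k) * Suc k = (2*m+1 choose k) * (2*m+1-k)" by (rule bin_step)
  have h2: "(m + Suc k choose Suc k) * Suc k = Suc (m+k) * (m+k choose k)"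
    using Suc_times_binomial[of k "m+k"] by (simp only: add_Suc_right mult.commute)
  have "uu m (Suc k) * (Suc k)^3 = ((2*m+1 choose Suc k) * Suc k) * ((m + Suc k choose Suc k) * Suc k)^2"
    unfolding uu_def by (rule r1)
  also have "\<dots> = ((2*m+1 choose k) * (2*m+1-k)) * (Suc (m+k) * (m+k choose k))^2"
    by (simp only: h1 h2)
  also have "\<dots> = uu m k * (2*m+1-k) * (Suc (m+k))^2"
    unfolding uu_def by (rule r2)
  finally show ?thesis .
qed

lemma r3: "(a::nat) * b^2 * (x*y*z^2) = (a*y*x) * (b*z)^2"
  by (simp add: power2_eq_square mult_ac)
lemma r4: "((a::nat)*x*y) * (b*z)^2 = a*b^2*(x*y*z^2)"
  by (simp add: power2_eq_square mult_ac)

lemma bin_up': "A = Suc B \<Longrightarrow> (A choose Suc k) * (B - k) = (B choose Suc k) * A"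
  using bin_up[of B "Suc k"] by (simp del: binomial_Suc_Suc)

lemma uu_down: "uu n (Suc k) * ((2*n+3)*(2*n+2)*(n+k+2)^2) = uu (Suc n) (Suc k) * ((2*n+2-k)*(2*n+1-k)*(n+1)^2)"
proof -
  have a1: "(2*n+3 choose Suc k) * (2*n+2-k) = (2*n+2 choose Suc k) * (2*n+3)"
    by (rule bin_up') simp
  have a2: "(2*n+2 choose Suc k) * (2*n+1-k) = (2*n+1 choose Suc k) * (2*n+2)"
    by (rule bin_up') simp
  have a3: "(Suc n + Suc k choose Suc k) * (n+1) = (n + Suc k choose Suc k) * (n+k+2)"
    using bin_up'[of "Suc n + Suc k" "n + Suc k" k] by simp
  have "uu n (Suc k) * ((2*n+3)*(2*n+2)*(n+k+2)^2)
      = ((2*n+1 choose Suc k) * (2*n+2) * (2*n+3)) * ((n + Suc k choose Suc k) * (n+k+2))^2"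
    unfolding uu_def by (rule r3)
  also have "\<dots> = ((2*n+3 choose Suc k) * (2*n+2-k) * (2*n+1-k)) * ((Suc n + Suc k choose Suc k) * (n+1))^2"
  proof -
    have b1: "(2*n+1 choose Suc k) * (2*n+2) * (2*n+3) = (2*n+3 choose Suc k) * (2*n+2-k) * (2*n+1-k)"
    proof -
      have "(2*n+1 choose Suc k) * (2*n+2) * (2*n+3) = ((2*n+2 choose Suc k) * (2*n+1-k)) * (2*n+3)"
        by (simp only: a2)
      also have "\<dots> = ((2*n+2 choose Suc k) * (2*n+3)) * (2*n+1-k)"
        by (metis mult.assoc mult.commute)
      also have "\<dots> = (2*n+3 choose Suc k) * (2*n+2-k) * (2*n+1-k)"
        by (simp only: a1[symmetric])
      finally show ?thesis .
    qed
    show ?thesis by (simp only: b1 a3)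
  qed
  also have "\<dots> = uu (Suc n) (Suc k) * ((2*n+2-k)*(2*n+1-k)*(n+1)^2)"
  proof -
    have e0: "2 * Suc n + 1 = 2*n+3" by simp
    have e: "uu (Suc n) (Suc k) = (2*n+3 choose Suc k) * (Suc n + Suc k choose Suc k)^2"
      by (simp only: uu_def e0)
    show ?thesis unfolding e by (rule r4)
  qed
  finally show ?thesis .
qed

lemma cX: "(n+1) * (2*n+2 choose (n+1)) = 2 * (2*n+1) * (2*n choose n)"
proof -
  have e1: "Suc n * (Suc (2*n+1) choose Suc n) = Suc (2*n+1) * (2*n+1 choose n)"
    by (rule Suc_times_binomial)
  have e2: "Suc n * (Suc (2*n) choose Suc n) = Suc (2*n) * (2*n choose n)"
    by (rule Suc_times_binomial)
  have e3: "(2*n+1 choose n) = (2*n+1 choose Suc n)"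
    using binomial_symmetric[of n "2*n+1"] by simp
  have f1: "Suc (2*n+1) = 2*n+2" "Suc n = n+1" "Suc (2*n) = 2*n+1" by simp_all
  have "(n+1) * (2*n+2 choose (n+1)) = (2*n+2) * (2*n+1 choose n)"
    using e1 unfolding f1 .
  also have "\<dots> = 2 * ((n+1) * (2*n+1 choose (n+1)))" unfolding e3 f1 by simp
  also have "(n+1) * (2*n+1 choose (n+1)) = (2*n+1) * (2*n choose n)" using e2 unfolding f1 .
  finally show ?thesis by simp
qed

lemma X2: "(2*n+2 choose (n+1)) = 2 * (2*n+1 choose (n+1))"
proof -
  have e3: "(2*n+1 choose n) = (2*n+1 choose Suc n)"
    using binomial_symmetric[of n "2*n+1"] by simp
  have "(2*n+2 choose (n+1)) = (Suc (2*n+1) choose Suc n)" by simp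
  also have "\<dots> = (2*n+1 choose n) + (2*n+1 choose Suc n)" by (rule binomial_Suc_Suc)
  finally show ?thesis using e3 by simp
qed

lemma X3: "(2*n+3 choose (n+1)) * (n+2) = (2*n+3) * (2*n+2 choose (n+1))"
proof -
  have "(Suc (2*n+2) choose (n+1)) * (Suc (2*n+2) - (n+1)) = (2*n+2 choose (n+1)) * Suc (2*n+2)"
    by (rule bin_up)
  moreover have "Suc (2*n+2) = 2*n+3" "Suc (2*n+2) - (n+1) = n+2" by simp_all
  ultimately show ?thesis by (simp only: mult.commute)
qed



lemma polyid:
  fixes N J :: rat
  defines "M \<equiv> N + 1"
  shows "(2*N+3-J)*(N+J+2)^2*(2*N+2)*(8*(2*N+3)^3 - (8 - 8*(J+1)^2 + 48*M + 5*M*(J+1) - 21*M*(J+1)^2 + 94*M^2 + 12*M^2*(J+1) + 60*M^3))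
     - 2*(N+1)^4*(2*N+3-J)*(2*N+2-J)*(2*N+1-J)
     - (8 - 8*J^2 + 48*M + 5*M*J - 21*M*J^2 + 94*M^2 + 12*M^2*J + 60*M^3)*(J+1)^3*(2*N+2) = 0"
  unfolding M_def by (simp add: algebra_simps power2_eq_square power3_eq_cube power4_eq_xxxx)

lemma perk_abs:
  fixes N J U0 U1 V C0 C1 :: rat
  defines "M \<equiv> N + 1"
  defines "p1 \<equiv> 8 - 8*(J+1)^2 + 48*M + 5*M*(J+1) - 21*M*(J+1)^2 + 94*M^2 + 12*M^2*(J+1) + 60*M^3"
  defines "p0 \<equiv> 8 - 8*J^2 + 48*M + 5*M*J - 21*M*J^2 + 94*M^2 + 12*M^2*J + 60*M^3"
  assumes N0: "N \<ge> 0" and J0: "J \<ge> 0"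
  assumes h1: "U1*(J+1)^3 = U0*((2*N+3-J)*(N+J+2)^2)"
  assumes h2: "V*((2*N+3)*(2*N+2)*(N+J+2)^2) = U1*((2*N+2-J)*(2*N+1-J)*(N+1)^2)"
  assumes h3: "C1*(N+1)^2 = 4*(2*N+3)^2*C0"
  shows "C1*U1 - C0*V = C1*U1*(p1/(8*(2*N+3)^3)) + C1*U0*(p0/(8*(2*N+3)^3))"
proof -
  define s where "s = 2*N+3"
  have s0: "s \<noteq> 0" unfolding s_def using N0 by linarith
  have d1: "(J+1)^3 \<noteq> 0" using J0 by simp
  have d2: "(2*N+3)*(2*N+2)*(N+J+2)^2 \<noteq> 0" using N0 J0 by (simp add: add_nonneg_pos)
  have W1: "((8*s^3 - p1)*U1 - 2*s*(N+1)^2*V - U0*p0) * (((2*N+3)*(2*N+2)*(N+J+2)^2)*(J+1)^3)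
        = (8*s^3 - p1)*((2*N+3)*(2*N+2)*(N+J+2)^2)*(U1*(J+1)^3) - 2*s*(N+1)^2*(J+1)^3*(V*((2*N+3)*(2*N+2)*(N+J+2)^2))
          - U0*p0*((2*N+3)*(2*N+2)*(N+J+2)^2)*(J+1)^3"
    by (simp only: algebra_simps)
  also have "\<dots> = (8*s^3 - p1)*((2*N+3)*(2*N+2)*(N+J+2)^2)*(U0*((2*N+3-J)*(N+J+2)^2)) - 2*s*(N+1)^2*(J+1)^3*(U1*((2*N+2-J)*(2*N+1-J)*(N+1)^2))
          - U0*p0*((2*N+3)*(2*N+2)*(N+J+2)^2)*(J+1)^3"
    by (simp only: h1 h2)
  also have "\<dots> = (8*s^3 - p1)*((2*N+3)*(2*N+2)*(N+J+2)^2)*(U0*((2*N+3-J)*(N+J+2)^2)) - 2*s*(N+1)^2*((2*N+2-J)*(2*N+1-J)*(N+1)^2)*(U1*(J+1)^3)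
          - U0*p0*((2*N+3)*(2*N+2)*(N+J+2)^2)*(J+1)^3"
    by (simp only: mult_ac)
  also have "\<dots> = U0*s*(N+J+2)^2*((2*N+3-J)*(N+J+2)^2*(2*N+2)*(8*(2*N+3)^3 - p1)
     - 2*(N+1)^4*(2*N+3-J)*(2*N+2-J)*(2*N+1-J) - p0*(J+1)^3*(2*N+2))"
    unfolding h1 s_def by (simp add: algebra_simps power2_eq_square power3_eq_cube power4_eq_xxxx)
  also have "\<dots> = 0" using polyid[of N J] unfolding p1_def p0_def M_def by simp
  finally have "((8*s^3 - p1)*U1 - 2*s*(N+1)^2*V - U0*p0) * (((2*N+3)*(2*N+2)*(N+J+2)^2)*(J+1)^3) = 0" .
  hence W: "(8*s^3 - p1)*U1 - 2*s*(N+1)^2*V - U0*p0 = 0" using d1 d2 by simp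
  have h3': "8*s^3*C0 = 2*s*(N+1)^2*C1"
  proof -
    have "8*s^3*C0 = 2*s*(4*(2*N+3)^2*C0)" unfolding s_def by (simp add: power2_eq_square power3_eq_cube)
    also have "\<dots> = 2*s*(N+1)^2*C1" using h3 by (simp add: mult_ac)
    finally show ?thesis .
  qed
  have "8*s^3*(C1*U1 - C0*V) = C1*((8*s^3 - p1)*U1 - 2*s*(N+1)^2*V - U0*p0) + C1*U1*p1 + C1*U0*p0"
    using h3' by (simp add: algebra_simps)
  also have "\<dots> = C1*U1*p1 + C1*U0*p0" using W by simp
  finally have "8*s^3*(C1*U1 - C0*V) = C1*U1*p1 + C1*U0*p0" .
  thus ?thesis using s0 unfolding s_def[symmetric] by (simp add: field_simps)
qed


definition cc :: "nat \<Rightarrow> rat" where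
  "cc n = (of_nat ((2*n+1) * ((2*n) choose n)))^2"

definition RR :: "nat \<Rightarrow> nat \<Rightarrow> rat" where
  "RR m k = (8 - 8*(of_nat k)^2 + 48*of_nat m + 5*of_nat m*of_nat k - 21*of_nat m*(of_nat k)^2
     + 94*(of_nat m)^2 + 12*(of_nat m)^2*of_nat k + 60*(of_nat m)^3) / (8*(2*of_nat m+1)^3)"

definition TT :: "nat \<Rightarrow> rat" where
  "TT k = of_nat ((2*k) choose k)^5 * of_nat (205*k^2 + 160*k + 32)"

definition BB :: "nat \<Rightarrow> rat" where
  "BB n = (\<Sum>k<Suc n. (-1)^k * of_nat (uu n k))"

definition ff :: "nat \<Rightarrow> nat \<Rightarrow> rat" where
  "ff n k = (-1)^k * cc (Suc n) * of_nat (uu (Suc n) k) - (-1)^k * cc n * of_nat (uu n k)"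

definition gg :: "nat \<Rightarrow> nat \<Rightarrow> rat" where
  "gg m k = (-1)^k * cc m * of_nat (uu m k) * RR m k"

lemma cc_X: "cc n = (of_nat (n+1) * of_nat (2*n+2 choose (n+1)) / 2)^2"
proof -
  have "of_nat ((n+1) * (2*n+2 choose (n+1))) = (of_nat (2 * ((2*n+1) * (2*n choose n))) :: rat)"
    using cX[of n] by (simp only: mult.assoc)
  hence "of_nat (n+1) * of_nat (2*n+2 choose (n+1)) / 2 = (of_nat ((2*n+1) * (2*n choose n)) :: rat)"
    by (simp only: of_nat_mult)
  thus ?thesis unfolding cc_def by simp
qed

lemma cc_Suc: "cc (Suc n) = (of_nat (2*n+3) * of_nat (2*n+2 choose (n+1)))^2"
proof -
  have e: "2 * Suc n + 1 = 2*n+3" "2 * Suc n = 2*n+2" "(2*n+2 choose Suc n) = (2*n+2 choose (n+1))" "2*n+2+1 = 2*n+3" by simp_all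
  show ?thesis unfolding cc_def by (simp only: e of_nat_mult)
qed

lemma cc_rel: "cc (Suc n) * (of_nat n + 1)^2 = 4 * (2 * of_nat n + 3)^2 * cc n"
proof -
  define X :: rat where "X = of_nat (2*n+2 choose (n+1))"
  show ?thesis unfolding cc_Suc cc_X[of n] X_def[symmetric] by (simp add: power2_eq_square field_simps)
qed

lemma cc_pos: "cc n > 0"
proof -
  have "(2*n+1) * (2*n choose n) > 0" by simp
  hence "(of_nat ((2*n+1) * (2*n choose n)) :: rat) > 0" by (simp only: of_nat_0_less_iff)
  thus ?thesis unfolding cc_def by (rule zero_less_power)
qed

lemma RR_Suc: "RR (Suc n) k =
   (8 - 8*(of_nat k)^2 + 48*(of_nat n+1) + 5*(of_nat n+1)*of_nat k - 21*(of_nat n+1)*(of_nat k)^2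
     + 94*(of_nat n+1)^2 + 12*(of_nat n+1)^2*of_nat k + 60*(of_nat n+1)^3) / (8*(2*of_nat n+3)^3)"
  unfolding RR_def of_nat_Suc by (simp add: algebra_simps)

lemma perk0: "ff n 0 = gg (Suc n) 0"
proof -
  define N :: rat where "N = of_nat n"
  have h3: "cc (Suc n) * (N+1)^2 = 4*(2*N+3)^2 * cc n" unfolding N_def by (rule cc_rel)
  have s0: "2*N+3 \<noteq> 0" unfolding N_def by (simp add: add_nonneg_pos)
  have "8*(2*N+3)^3 * (cc (Suc n) - cc n) = cc (Suc n) * (8 + 48*(N+1) + 94*(N+1)^2 + 60*(N+1)^3)"
  proof -
    have "8*(2*N+3)^3 * cc n = 2*(2*N+3)*(4*(2*N+3)^2 * cc n)" by (simp add: power2_eq_square power3_eq_cube)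
    also have "\<dots> = 2*(2*N+3)*(N+1)^2*cc (Suc n)" using h3 by (simp add: mult_ac)
    finally have "8*(2*N+3)^3 * cc n = 2*(2*N+3)*(N+1)^2*cc (Suc n)" .
    thus ?thesis by (simp add: algebra_simps power2_eq_square power3_eq_cube)
  qed
  hence "cc (Suc n) - cc n = cc (Suc n) * ((8 + 48*(N+1) + 94*(N+1)^2 + 60*(N+1)^3) / (8*(2*N+3)^3))"
    using s0 by (simp add: field_simps)
  thus ?thesis unfolding ff_def gg_def RR_Suc N_def by (simp add: uu_def)
qed

lemma perk:
  assumes jn: "j \<le> n"
  shows "ff n (Suc j) = gg (Suc n) (Suc j) - gg (Suc n) j"
proof -
  define N :: rat where "N = of_nat n"
  define J :: rat where "J = of_nat j"
  define U0 :: rat where "U0 = of_nat (uu (Suc n) j)"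
  define U1 :: rat where "U1 = of_nat (uu (Suc n) (Suc j))"
  define V :: rat where "V = of_nat (uu n (Suc j))"
  have N0: "N \<ge> 0" and J0: "J \<ge> 0" unfolding N_def J_def by simp_all
  have h1: "U1*(J+1)^3 = U0*((2*N+3-J)*(N+J+2)^2)"
  proof -
    define d where "d = 2*Suc n+1-j"
    have dc: "(of_nat d :: rat) = 2*N+3-J" unfolding d_def N_def J_def using jn by (simp add: of_nat_diff)
    have st: "uu (Suc n) (Suc j) * (Suc j)^3 = uu (Suc n) j * d * (Suc (Suc n + j))^2"
      using uu_step[of "Suc n" j] unfolding d_def .
    have "(of_nat (uu (Suc n) (Suc j) * (Suc j)^3) :: rat) = of_nat (uu (Suc n) j * d * (Suc (Suc n + j))^2)"
      using st by (rule arg_cong)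
    hence "U1 * (J+1)^3 = U0 * of_nat d * (N+J+2)^2"
      unfolding U0_def U1_def N_def J_def of_nat_mult of_nat_power by (simp add: algebra_simps)
    thus ?thesis unfolding dc by (simp add: mult.assoc)
  qed
  have h2: "V*((2*N+3)*(2*N+2)*(N+J+2)^2) = U1*((2*N+2-J)*(2*N+1-J)*(N+1)^2)"
  proof -
    define d1 where "d1 = 2*n+2-j"
    define d2 where "d2 = 2*n+1-j"
    have dc: "(of_nat d1 :: rat) = 2*N+2-J" "(of_nat d2 :: rat) = 2*N+1-J"
      unfolding d1_def d2_def N_def J_def using jn by (simp_all add: of_nat_diff)
    have st: "uu n (Suc j) * ((2*n+3)*(2*n+2)*(n+j+2)^2) = uu (Suc n) (Suc j) * (d1*d2*(n+1)^2)"
      using uu_down[of n j] unfolding d1_def d2_def .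
    have "(of_nat (uu n (Suc j) * ((2*n+3)*(2*n+2)*(n+j+2)^2)) :: rat) = of_nat (uu (Suc n) (Suc j) * (d1*d2*(n+1)^2))"
      using st by (rule arg_cong)
    hence "V * ((2*N+3)*(2*N+2)*(N+J+2)^2) = U1 * (of_nat d1 * of_nat d2 * (N+1)^2)"
      unfolding V_def U1_def N_def J_def of_nat_mult of_nat_power by (simp add: algebra_simps)
    thus ?thesis unfolding dc .
  qed
  have h3: "cc (Suc n) * (N+1)^2 = 4*(2*N+3)^2 * cc n" unfolding N_def by (rule cc_rel)
  note key = perk_abs[OF N0 J0 h1 h2 h3]
  have R1: "RR (Suc n) (Suc j) = (8 - 8*(J+1)^2 + 48*(N+1) + 5*(N+1)*(J+1) - 21*(N+1)*(J+1)^2 + 94*(N+1)^2 + 12*(N+1)^2*(J+1) + 60*(N+1)^3) / (8*(2*N+3)^3)"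
    unfolding RR_Suc N_def J_def of_nat_Suc by (simp add: algebra_simps)
  have R0: "RR (Suc n) j = (8 - 8*J^2 + 48*(N+1) + 5*(N+1)*J - 21*(N+1)*J^2 + 94*(N+1)^2 + 12*(N+1)^2*J + 60*(N+1)^3) / (8*(2*N+3)^3)"
    unfolding RR_Suc N_def J_def by (simp add: algebra_simps)
  have key2: "cc (Suc n) * U1 - cc n * V = cc (Suc n) * U1 * RR (Suc n) (Suc j) + cc (Suc n) * U0 * RR (Suc n) j"
    unfolding R1 R0 by (rule key)
  have "ff n (Suc j) = (-1)^Suc j * (cc (Suc n) * U1 - cc n * V)"
    unfolding ff_def U1_def V_def by (simp add: algebra_simps)
  also have "\<dots> = (-1)^Suc j * (cc (Suc n) * U1 * RR (Suc n) (Suc j) + cc (Suc n) * U0 * RR (Suc n) j)"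
    unfolding key2 ..
  also have "\<dots> = gg (Suc n) (Suc j) - gg (Suc n) j"
    unfolding gg_def U1_def U0_def by (simp add: algebra_simps)
  finally show ?thesis .
qed


lemma tele: "K \<le> Suc (Suc n) \<Longrightarrow> (\<Sum>k<K. ff n k) = (if K = 0 then 0 else gg (Suc n) (K - 1))"
proof (induction K)
  case 0 show ?case by simp
next
  case (Suc K)
  hence IH: "(\<Sum>k<K. ff n k) = (if K = 0 then 0 else gg (Suc n) (K - 1))" by simp
  show ?case
  proof (cases K)
    case 0 thus ?thesis using perk0 by simp
  next
    case (Suc j)
    have "j \<le> n" using Suc.prems \<open>K = Suc j\<close> by simp
    thus ?thesis using IH perk[of j n] \<open>K = Suc j\<close> by simp
  qed
qed

lemma B_abs:
  fixes s d X p :: rat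
  assumes "s \<noteq> 0" "d \<noteq> 0"
  shows "(s*X)^2 * (s*X/d*X^2) * (p/(8*s^3)) = X^5*(p/(8*d))"
  using assms by (simp add: field_simps power2_eq_square power3_eq_cube eval_nat_numeral)

lemma diag: "cc n * of_nat (uu n (Suc n)) + cc (Suc n) * of_nat (uu (Suc n) (Suc n)) * RR (Suc n) (Suc n) = TT (Suc n) / 32"
proof -
  define N :: rat where "N = of_nat n"
  define X :: rat where "X = of_nat (2*n+2 choose (n+1))"
  define Y :: rat where "Y = of_nat (2*n+3 choose (n+1))"
  have u1n: "uu n (Suc n) * 8 = (2*n+2 choose (n+1))^3"
  proof -
    have e: "n + Suc n = 2*n+1" "Suc n = n+1" "n + (n+1) = 2*n+1" by simp_all
    have a: "\<And>a::nat. a * a^2 * 8 = (2*a)^3" by (simp add: power2_eq_square power3_eq_cube)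
    have "uu n (Suc n) = (2*n+1 choose (n+1)) * (2*n+1 choose (n+1))^2" by (simp only: uu_def e)
    thus ?thesis unfolding X2 by (simp only: a)
  qed
  have u1: "of_nat (uu n (Suc n)) = X^3 / 8"
    using arg_cong[OF u1n, of "of_nat :: nat \<Rightarrow> rat"] unfolding X_def by simp
  have u2n: "uu (Suc n) (Suc n) = (2*n+3 choose (n+1)) * (2*n+2 choose (n+1))^2"
  proof -
    have e: "2 * (n+1) + 1 = 2*n+3" "n+1 + (n+1) = 2*n+2" "Suc n = n+1" by simp_all
    show ?thesis by (simp only: uu_def e)
  qed
  have u2: "of_nat (uu (Suc n) (Suc n)) = Y * X^2" unfolding u2n X_def Y_def by simp
  have YX: "Y * (N+2) = (2*N+3) * X"
  proof -
    have "of_nat ((2*n+3 choose (n+1)) * (n+2)) = (of_nat ((2*n+3) * (2*n+2 choose (n+1))) :: rat)"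
      using X3[of n] by (rule arg_cong)
    thus ?thesis unfolding X_def Y_def N_def of_nat_mult of_nat_add of_nat_numeral .
  qed
  have t: "TT (Suc n) = X^5 * (205*(N+1)^2 + 160*(N+1) + 32)"
  proof -
    have e: "2 * Suc n = 2*n+2" "Suc n = n+1" by simp_all
    show ?thesis unfolding TT_def e X_def N_def by simp
  qed
  have c0: "cc n = ((N+1) * X / 2)^2" unfolding cc_X X_def N_def by simp
  have c1: "cc (Suc n) = ((2*N+3) * X)^2" unfolding cc_Suc X_def N_def by simp
  have r: "RR (Suc n) (Suc n) = (8 - 8*(N+1)^2 + 48*(N+1) + 5*(N+1)*(N+1) - 21*(N+1)*(N+1)^2 + 94*(N+1)^2 + 12*(N+1)^2*(N+1) + 60*(N+1)^3) / (8*(2*N+3)^3)"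
    unfolding RR_Suc N_def of_nat_Suc by (simp add: algebra_simps)
  have N0: "N \<ge> 0" unfolding N_def by simp
  have Yv: "Y = (2*N+3) * X / (N+2)" using YX N0 by (simp add: field_simps)
  have nz: "N + 2 \<noteq> 0" "2*N+3 \<noteq> 0" using N0 by linarith+
  define p where "p = (8 - 8*(N+1)^2 + 48*(N+1) + 5*(N+1)*(N+1) - 21*(N+1)*(N+1)^2 + 94*(N+1)^2 + 12*(N+1)^2*(N+1) + 60*(N+1)^3)"
  have A: "((N+1)*X/2)^2 * (X^3/8) = X^5 * ((N+1)^2/32)"
    by (simp add: power2_eq_square power3_eq_cube field_simps eval_nat_numeral)
  have B: "((2*N+3)*X)^2 * ((2*N+3)*X/(N+2)*X^2) * (p / (8*(2*N+3)^3)) = X^5 * (p/(8*(N+2)))"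
    using B_abs[OF nz(2) nz(1)] .
  have C: "(N+1)^2/32 + p/(8*(N+2)) = (205*(N+1)^2 + 160*(N+1) + 32)/32"
    using nz unfolding p_def by (simp add: field_simps) (simp add: algebra_simps power2_eq_square power3_eq_cube)
  have "cc n * of_nat (uu n (Suc n)) + cc (Suc n) * of_nat (uu (Suc n) (Suc n)) * RR (Suc n) (Suc n)
      = X^5 * ((N+1)^2/32) + X^5 * (p/(8*(N+2)))"
    unfolding c0 c1 u1 u2 r Yv p_def[symmetric] A B ..
  also have "\<dots> = X^5 * ((N+1)^2/32 + p/(8*(N+2)))" by (simp add: algebra_simps)
  also have "\<dots> = TT (Suc n) / 32" unfolding C t by simp
  finally show ?thesis .
qed

lemma step: "cc (Suc n) * BB (Suc n) - cc n * BB n = (-1)^Suc n * TT (Suc n) / 32"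
proof -
  have "(\<Sum>k<Suc (Suc n). ff n k) = gg (Suc n) (Suc n)" using tele[of "Suc (Suc n)" n] by simp
  moreover have "(\<Sum>k<Suc (Suc n). ff n k) = cc (Suc n) * BB (Suc n) - cc n * (BB n + (-1)^Suc n * of_nat (uu n (Suc n)))"
    unfolding ff_def BB_def sum_subtractf
    by (simp add: sum_distrib_left algebra_simps)
  ultimately have "cc (Suc n) * BB (Suc n) - cc n * BB n = (-1)^Suc n * (cc n * of_nat (uu n (Suc n)) + cc (Suc n) * of_nat (uu (Suc n) (Suc n)) * RR (Suc n) (Suc n))"
    unfolding gg_def by (simp add: algebra_simps)
  thus ?thesis unfolding diag by simp
qed

lemma main_id: "(\<Sum>k<Suc n. (-1)^k * TT k) = 32 * cc n * BB n"
proof (induction n)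
  case 0
  show ?case by (simp add: TT_def cc_def BB_def uu_def)
next
  case (Suc n)
  have "(\<Sum>k<Suc (Suc n). (-1)^k * TT k) = 32 * cc n * BB n + (-1)^Suc n * TT (Suc n)"
    using Suc.IH by simp
  also have "\<dots> = 32 * cc (Suc n) * BB (Suc n)" using step[of n] by (simp add: algebra_simps)
  finally show ?case .
qed

definition SS :: "nat \<Rightarrow> rat" where
  "SS n = (\<Sum>k<Suc n. (-1)^(n-k) * TT k)"

lemma sign_split: "k \<le> n \<Longrightarrow> ((-1)::rat)^(n-k) = (-1)^n * (-1)^k"
proof -
  assume "k \<le> n"
  then obtain d where d: "n = k + d" by (metis le_add_diff_inverse)
  show ?thesis unfolding d by (simp add: power_add minus_one_power_iff)
qed

lemma SS_main: "SS n = (-1)^n * (32 * cc n * BB n)"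
proof -
  have "SS n = (\<Sum>k<Suc n. (-1)^n * ((-1)^k * TT k))"
    unfolding SS_def by (rule sum.cong) (auto simp: sign_split)
  also have "\<dots> = (-1)^n * (\<Sum>k<Suc n. (-1)^k * TT k)" by (rule sum_distrib_left[symmetric])
  finally show ?thesis unfolding main_id .
qed

lemma TT_mono: "TT n < TT (Suc n)"
proof -
  define C where "C = (2*n choose n)"
  define X where "X = (2*n+2 choose (n+1))"
  have C1: "C \<ge> 1" unfolding C_def by (simp add: Suc_le_eq)
  have "(n+1) * X = 2*(2*n+1) * C" unfolding X_def C_def by (rule cX)
  hence "(n+1) * C \<le> (n+1) * X" by simp
  hence CX: "C \<le> X" using Suc_mult_le_cancel1[of n C X] unfolding Suc_eq_plus1 by blast
  have P: "205*n^2 + 160*n + 32 < 205*(Suc n)^2 + 160*(Suc n) + (32::nat)"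
    by (simp add: power2_eq_square)
  have "C^5 * (205*n^2 + 160*n + 32) \<le> X^5 * (205*n^2 + 160*n + 32)"
    using CX by (simp add: power_mono)
  also have "\<dots> < X^5 * (205*(Suc n)^2 + 160*(Suc n) + 32)"
    using P C1 CX by simp
  finally have lt: "C^5 * (205*n^2 + 160*n + 32) < X^5 * (205*(Suc n)^2 + 160*(Suc n) + 32)" .
  have e: "2 * (n+1) = 2*n+2" "Suc n = n+1" by simp_all
  have t1: "TT n = of_nat (C^5 * (205*n^2 + 160*n + 32))" unfolding TT_def C_def by simp
  have t2: "TT (Suc n) = of_nat (X^5 * (205*(Suc n)^2 + 160*(Suc n) + 32))"
    unfolding TT_def X_def by (simp only: e of_nat_mult of_nat_power)
  show ?thesis unfolding t1 t2 using lt by (simp only: of_nat_less_iff)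
qed

lemma SS_pos: "0 < SS n \<and> SS n \<le> TT n"
proof (induction n)
  case 0
  show ?case by (simp add: SS_def TT_def)
next
  case (Suc n)
  have "SS (Suc n) = (\<Sum>k<Suc n. (-1)^(Suc n-k) * TT k) + TT (Suc n)"
    unfolding SS_def by simp
  also have "(\<Sum>k<Suc n. (-1)^(Suc n-k) * TT k) = - SS n"
    unfolding SS_def sum_negf[symmetric] by (rule sum.cong) (auto simp: Suc_diff_le)
  finally have eq: "SS (Suc n) = TT (Suc n) - SS n" by simp
  have "TT n < TT (Suc n)" by (rule TT_mono)
  thus ?case using Suc.IH eq by linarith
qed

lemma den_eq: "8 * (of_nat (Suc n) :: rat)^2 * of_nat ((2*Suc n) choose Suc n)^2 = 32 * cc n"
proof -
  have e: "2 * Suc n = 2*n+2" "(2*n+2 choose Suc n) = (2*n+2 choose (n+1))" by simp_all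
  show ?thesis unfolding cc_X e by (simp add: power2_eq_square)
qed

lemma a_seq_eq: "a_seq (Suc n) = SS n / (32 * cc n)"
proof -
  have "(\<Sum>k<Suc n. (-1) ^ (Suc n - 1 - k) * of_nat ((2*k) choose k) ^ 5 * of_nat (205*k^2 + 160*k + 32)) = SS n"
    unfolding SS_def TT_def by (simp add: mult.assoc)
  thus ?thesis unfolding a_seq_def den_eq by simp
qed

theorem corollary14:
  fixes n :: nat
  assumes "n \<ge> 1"
  shows "\<exists>m::int. m > 0 \<and> a_seq n = of_int m"
proof -
  obtain n' where n: "n = Suc n'" using assms by (cases n) auto
  define m :: int where "m = (-1)^n' * (\<Sum>k<Suc n'. (-1)^k * int (uu n' k))"
  have cpos: "cc n' > 0" by (rule cc_pos)
  have "a_seq n = (-1)^n' * BB n'"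
    unfolding n a_seq_eq SS_main using cpos by (simp add: field_simps)
  also have "\<dots> = of_int m" unfolding m_def BB_def by simp
  finally have am: "a_seq n = of_int m" .
  have "a_seq n > 0" unfolding n a_seq_eq using SS_pos[of n'] cpos by simp
  hence "m > 0" using am by simp
  thus ?thesis using am by blast
qed

end
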